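(* For every BIMS channel with capacity $C$ and every $R\ge0$, the following hold (as inequalities in $[-\infty,+\infty]$): (a) Strong converse exponent: $E_{\rm sc}^{\rm bsc}(R;C)\le E_{\rm sc}(R)\le E_{\rm sc}^{\rm bec}(R;C)$. (b) Sphere-packing exponent: $E_{\rm sp}^{\rm bsc}(R;C)\le E_{\rm sp}(R)\le E_{\rm sp}^{\rm bec}(R;C)$. (c) Generalized Feinstein exponent: $E_{\rm gfb}^{\rm bsc}(R;C)\le E_{\rm gfb}(R)\le E_{\rm gfb}^{\rm bec}(R;C)$.
   Context: A BIMS (binary-input memoryless symmetric) channel is a memoryless channel with input alphabet $\{x_0,x_1\}$, finite output alphabet $\mathcal Y$ and transition probabilities $P_{Y|X}(y|x)$. It is symmetric in Gallager's sense: the columns of the $2\times|\mathcal Y|$ transition matrix (rows indexed by inputs) can be partitioned into submatrices such that, in each submatrix, every row is a permutation of every other row and every column is a permutation of every other column. Inputs are equiprobable and logarithms are base 2. The capacity $C$ is $I(X;Y)$ under equiprobable inputs. For $\rho>-1$, $$F(\rho)=\sum_{x}\tfrac12\sum_{y:\,P_{Y|X}(y|x)>0}P_{Y|X}(y|x)\left(\frac{\tfrac12\sum_{x'}P_{Y|X}(y|x')^{1/(1+\rho)}}{P_{Y|X}(y|x)^{1/(1+\rho)}}\right)^{\rho},$$ and $E_0(\rho)=-\log F(\rho)$. The exponents are $$E_{\rm sc}(R)=\sup_{-1<\rho\le0}\bigl(E_0(\rho)-\rho R\bigr),\qquad E_{\rm sp}(R)=\sup_{\rho>0}\bigl(E_0(\rho)-\rho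 R\bigr),\qquad E_{\rm gfb}(R)=\sup_{\rho\ge0}\frac{E_0(\rho)-\rho R}{1+\rho}.$$ The quantities with superscript bec (resp. bsc) are defined by the same formulas with $E_0(\rho)$ replaced by $-\log F^{\rm bec}(\rho;C)$ (resp. $-\log F^{\rm bsc}(\rho;C)$), where $$F^{\rm bec}(\rho;C)=1+(2^{-\rho}-1)C,$$ $$F^{\rm bsc}(\rho;C)=2^{-\rho}\bigl(\varepsilon^{1/(1+\rho)}+(1-\varepsilon)^{1/(1+\rho)}\bigr)^{1+\rho},\qquad \varepsilon=h^{-1}(1-C),$$ $h$ is the binary entropy function and $h^{-1}$ its inverse on $[0,\tfrac12]$. *)

theory Defs
  imports Complex_Main "HOL-Library.Extended_Real"
begin

text \<open>Binary-input channel: inputs x0, x1 are modelled by bool (False = x0, True = x1);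
  the finite output alphabet is a finite type 'y; W x y = P_{Y|X}(y|x).\<close>

definition stochastic_channel :: "(bool \<Rightarrow> 'y::finite \<Rightarrow> real) \<Rightarrow> bool" where
  "stochastic_channel W \<longleftrightarrow> (\<forall>x y. W x y \<ge> 0) \<and> (\<forall>x. (\<Sum>y\<in>UNIV. W x y) = 1)"

text \<open>Gallager symmetry: the columns (outputs) can be partitioned into blocks such that in each
  submatrix every row is a permutation of every other row and every column is a permutation
  of every other column.\<close>
definition gallager_symmetric :: "(bool \<Rightarrow> 'y::finite \<Rightarrow> real) \<Rightarrow> bool" where
  "gallager_symmetric W \<longleftrightarrow>
     (\<exists>P :: 'y set set.
        \<Union>P = UNIV \<and> {} \<notin> P \<and> (\<forall>A\<in>P. \<forall>B\<in>P. A \<noteq> B \<longrightarrow> A \<inter> B = {}) \<and>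
        (\<forall>B\<in>P.
           (\<forall>x x'. \<exists>\<sigma>. bij_betw \<sigma> B B \<and> (\<forall>y\<in>B. W x y = W x' (\<sigma> y))) \<and>
           (\<forall>y\<in>B. \<forall>y'\<in>B.
              (W False y = W False y' \<and> W True y = W True y') \<or>
              (W False y = W True y' \<and> W True y = W False y'))))"

definition BIMS :: "(bool \<Rightarrow> 'y::finite \<Rightarrow> real) \<Rightarrow> bool" where
  "BIMS W \<longleftrightarrow> stochastic_channel W \<and> gallager_symmetric W"

text \<open>Capacity = I(X;Y) with equiprobable inputs, base-2 logarithm, 0 log 0 = 0.\<close>
definition capacity :: "(bool \<Rightarrow> 'y::finite \<Rightarrow> real) \<Rightarrow> real" where
  "capacity W = (\<Sum>x\<in>UNIV. 1/2 * (\<Sum>y | W x y > 0.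
      W x y * log 2 (W x y / (1/2 * (\<Sum>x'\<in>UNIV. W x' y)))))"

definition gallager_F :: "(bool \<Rightarrow> 'y::finite \<Rightarrow> real) \<Rightarrow> real \<Rightarrow> real" where
  "gallager_F W \<rho> = (\<Sum>x\<in>UNIV. 1/2 * (\<Sum>y | W x y > 0.
      W x y * ((1/2 * (\<Sum>x'\<in>UNIV. W x' y powr (1/(1+\<rho>)))) / (W x y powr (1/(1+\<rho>)))) powr \<rho>))"

definition gallager_E0 :: "(bool \<Rightarrow> 'y::finite \<Rightarrow> real) \<Rightarrow> real \<Rightarrow> real" where
  "gallager_E0 W \<rho> = - log 2 (gallager_F W \<rho>)"

definition E_sc :: "(real \<Rightarrow> real) \<Rightarrow> real \<Rightarrow> ereal" where
  "E_sc E0 R = (SUP \<rho>\<in>{-1<..0}. ereal (E0 \<rho> - \<rho> * R))"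

definition E_sp :: "(real \<Rightarrow> real) \<Rightarrow> real \<Rightarrow> ereal" where
  "E_sp E0 R = (SUP \<rho>\<in>{0<..}. ereal (E0 \<rho> - \<rho> * R))"

definition E_gfb :: "(real \<Rightarrow> real) \<Rightarrow> real \<Rightarrow> ereal" where
  "E_gfb E0 R = (SUP \<rho>\<in>{0..}. ereal ((E0 \<rho> - \<rho> * R) / (1 + \<rho>)))"

definition plogp :: "real \<Rightarrow> real" where
  "plogp t = (if t = 0 then 0 else t * log 2 t)"

definition bin_entropy :: "real \<Rightarrow> real" where
  "bin_entropy e = - plogp e - plogp (1 - e)"

definition bin_entropy_inv :: "real \<Rightarrow> real" where
  "bin_entropy_inv t = (THE e. e \<in> {0..1/2} \<and> bin_entropy e = t)"

definition F_bec :: "real \<Rightarrow> real \<Rightarrow> real" where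
  "F_bec C \<rho> = 1 + (2 powr (-\<rho>) - 1) * C"

definition F_bsc :: "real \<Rightarrow> real \<Rightarrow> real" where
  "F_bsc C \<rho> = (let \<epsilon> = bin_entropy_inv (1 - C) in
     2 powr (-\<rho>) * (\<epsilon> powr (1/(1+\<rho>)) + (1 - \<epsilon>) powr (1/(1+\<rho>))) powr (1+\<rho>))"

definition E0_bec :: "real \<Rightarrow> real \<Rightarrow> real" where
  "E0_bec C \<rho> = - log 2 (F_bec C \<rho>)"

definition E0_bsc :: "real \<Rightarrow> real \<Rightarrow> real" where
  "E0_bsc C \<rho> = - log 2 (F_bsc C \<rho>)"

end

theory Submission
  imports Defs "HOL-Analysis.Analysis" "HOL-Real_Asymp.Real_Asymp"
begin



lemma keyK:
  fixes v x :: real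
  assumes v: "v > 0" and xv: "x \<le> v"
  shows "0 \<le> x * (exp v + 1) - exp v + exp (v - x) - exp x + 1"
proof -
  define \<phi> where "\<phi> = (\<lambda>x. x * (exp v + 1) - exp v + exp (v - x) - exp x + 1)"
  define \<phi>' where "\<phi>' = (\<lambda>x. (exp v + 1) - exp (v - x) - exp x)"
  have der: "(\<phi> has_real_derivative \<phi>' z) (at z)" for z
    unfolding \<phi>_def \<phi>'_def by (auto intro!: derivative_eq_intros)
  have fac: "\<phi>' z = (1 - exp (- z)) * (exp v - exp z)" for z
    unfolding \<phi>'_def by (simp add: algebra_simps exp_diff exp_minus field_simps)
  have c: "continuous_on S \<phi>" for S
    unfolding \<phi>_def by (intro continuous_intros)
  have "\<phi> 0 = 0" unfolding \<phi>_def by simp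
  show ?thesis
  proof (cases "x \<ge> 0")
    case True
    have "\<phi> 0 \<le> \<phi> x"
    proof (rule DERIV_nonneg_imp_increasing_open[OF True _ c])
      fix z assume z: "0 < z" "z < x"
      have "\<phi>' z \<ge> 0" unfolding fac using z xv
        by (intro mult_nonneg_nonneg) auto
      then show "\<exists>y. (\<phi> has_real_derivative y) (at z) \<and> 0 \<le> y" using der by blast
    qed
    then show ?thesis using \<open>\<phi> 0 = 0\<close> unfolding \<phi>_def by simp
  next
    case False
    have "\<phi> x \<ge> \<phi> 0"
    proof (rule DERIV_nonpos_imp_decreasing_open[of x 0, OF _ _ c])
      show "x \<le> 0" using False by simp
      fix z assume z: "x < z" "z < 0"
      have "1 - exp (-z) \<le> 0" using z by simp
      moreover have "exp v - exp z \<ge> 0" using z v by simp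
      ultimately have "\<phi>' z \<le> 0" unfolding fac by (simp add: mult_nonpos_nonneg)
      then show "\<exists>y. (\<phi> has_real_derivative y) (at z) \<and> y \<le> 0" using der by blast
    qed
    then show ?thesis using \<open>\<phi> 0 = 0\<close> unfolding \<phi>_def by simp
  qed
qed

definition Dt :: "real \<Rightarrow> real \<Rightarrow> real \<Rightarrow> real" where
  "Dt s \<rho> u = (1 + exp (- s * u)) powr \<rho> * (exp ((1 - s) * u) - 1) / u"

lemma Dt_mono:
  assumes s: "s > 0" and rs: "\<rho> * s = 1 - s" and u1: "0 < u1" and u12: "u1 \<le> u2"
  shows "Dt s \<rho> u1 \<le> Dt s \<rho> u2"
proof -
  define P where "P = (\<lambda>u. (1 + exp (- s * u)) powr \<rho>)"
  define P' where "P' = (\<lambda>u::real. \<rho> * (1 + exp (- s * u)) powr (\<rho> - 1) * (- s * exp (- s * u)))"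
  define Q where "Q = (\<lambda>u. (exp ((1 - s) * u) - 1) / u)"
  define Q' where "Q' = (\<lambda>u. ((1 - s) * exp ((1 - s) * u) * u - (exp ((1 - s) * u) - 1)) / u^2)"
  have dP: "(P has_real_derivative P' u) (at u)" for u
    unfolding P_def P'_def
    by (auto intro!: derivative_eq_intros simp: powr_diff add_pos_pos)
  have dQ: "(Q has_real_derivative Q' u) (at u)" if "u \<noteq> 0" for u
    unfolding Q_def Q'_def using that
    by (auto intro!: derivative_eq_intros simp: power2_eq_square field_simps)
  have DtPQ: "Dt s \<rho> u = P u * Q u" for u unfolding Dt_def P_def Q_def by simp
  have pos: "P' u * Q u + P u * Q' u \<ge> 0" if u: "u > 0" for u
  proof -
    define E1 where "E1 = exp (- s * u)"
    define E2 where "E2 = exp ((1 - s) * u)"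
    have E1p: "E1 > 0" unfolding E1_def by simp
    have ev: "exp u = E2 / E1" unfolding E1_def E2_def by (simp add: exp_diff[symmetric] algebra_simps)
    have evx: "exp (u - (1 - s) * u) = 1 / E1" unfolding E1_def by (simp add: exp_minus algebra_simps divide_inverse)
    have K: "0 \<le> (1 - s) * u * (E2 / E1 + 1) - E2 / E1 + 1 / E1 - E2 + 1"
      using keyK[of u "(1 - s) * u"] u s ev evx unfolding E2_def[symmetric]
      by (simp add: mult_le_cancel_right2)
    have K2: "0 \<le> (1 - s) * u * (E2 + E1) - E2 + 1 - E1 * E2 + E1"
    proof -
      have "0 \<le> E1 * ((1 - s) * u * (E2 / E1 + 1) - E2 / E1 + 1 / E1 - E2 + 1)"
        using K E1p by simp
      also have "\<dots> = (1 - s) * u * (E2 + E1) - E2 + 1 - E1 * E2 + E1"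
        using E1p by (simp add: field_simps)
      finally show ?thesis .
    qed
    have Pp: "P u = (1 + E1) powr (\<rho> - 1) * (1 + E1)"
      unfolding P_def E1_def by (simp add: powr_diff add_pos_pos)
    have P'e: "P' u = - (1 - s) * (1 + E1) powr (\<rho> - 1) * E1"
    proof -
      have "P' u = - (\<rho> * s) * (1 + E1) powr (\<rho> - 1) * E1"
        unfolding P'_def E1_def by (simp add: algebra_simps)
      then show ?thesis using rs by simp
    qed
    have "P' u * Q u + P u * Q' u
        = (1 + E1) powr (\<rho> - 1) / u^2 * ((1 - s) * u * (E2 + E1) - E2 + 1 - E1 * E2 + E1)"
      unfolding Pp P'e Q_def Q'_def E1_def[symmetric] E2_def[symmetric]
      using u by (simp add: field_simps power2_eq_square)
    also have "\<dots> \<ge> 0" using K2 by (intro mult_nonneg_nonneg) auto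
    finally show ?thesis .
  qed
  have "P u1 * Q u1 \<le> P u2 * Q u2"
  proof (rule DERIV_nonneg_imp_increasing_open[OF u12])
    fix z assume z: "u1 < z" "z < u2"
    then have "z > 0" using u1 by simp
    show "\<exists>y. ((\<lambda>u. P u * Q u) has_real_derivative y) (at z) \<and> 0 \<le> y"
      using DERIV_mult[OF dP dQ[of z]] pos[OF \<open>z > 0\<close>] \<open>z > 0\<close> by (auto simp: mult.commute)
  next
    show "continuous_on {u1..u2} (\<lambda>u. P u * Q u)"
      unfolding P_def Q_def using u1
      by (intro continuous_intros) (auto, smt (verit) exp_gt_zero)
  qed
  then show ?thesis by (simp add: DtPQ)
qed

definition Rr :: "real \<Rightarrow> real \<Rightarrow> real \<Rightarrow> real" where
  "Rr s \<rho> e = (e powr s + (1 - e) powr s) powr \<rho> * (e powr (s - 1) - (1 - e) powr (s - 1)) / ln ((1 - e) / e)"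

lemma Rr_Dt:
  assumes rs: "\<rho> * s = 1 - s" and e: "0 < e" "e < 1"
  shows "Rr s \<rho> e = Dt s \<rho> (ln ((1 - e) / e))"
proof -
  define u where "u = ln ((1 - e) / e)"
  define L where "L = ln e"
  have l1: "ln (1 - e) = L + u" unfolding u_def L_def using e by (simp add: ln_div)
  have pe: "e powr c = exp (c * L)" for c unfolding L_def using e by (simp add: powr_def)
  have p1e: "(1 - e) powr c = exp (c * (L + u))" for c using e l1 by (simp add: powr_def)
  have A: "e powr s + (1 - e) powr s = exp (s * L + s * u) * (1 + exp (- s * u))"
    unfolding pe p1e by (simp add: algebra_simps exp_add[symmetric])
  have Ap: "(e powr s + (1 - e) powr s) powr \<rho> = exp ((1 - s) * L + (1 - s) * u) * (1 + exp (- s * u)) powr \<rho>"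
  proof -
    have "(e powr s + (1 - e) powr s) powr \<rho> = exp (s * L + s * u) powr \<rho> * (1 + exp (- s * u)) powr \<rho>"
      unfolding A by (rule powr_mult)
    also have "exp (s * L + s * u) powr \<rho> = exp (\<rho> * s * L + \<rho> * s * u)"
      by (simp add: powr_def algebra_simps)
    finally show ?thesis using rs by simp
  qed
  have N: "e powr (s - 1) - (1 - e) powr (s - 1) = exp ((s - 1) * L) * (1 - exp ((s - 1) * u))"
    unfolding pe p1e by (simp add: algebra_simps exp_add[symmetric])
  have "Rr s \<rho> e = (exp ((1 - s) * L + (1 - s) * u) * exp ((s - 1) * L) * (1 - exp ((s - 1) * u)))
      * (1 + exp (- s * u)) powr \<rho> / u"
    unfolding Rr_def Ap N u_def[symmetric] by (simp add: algebra_simps)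
  also have "exp ((1 - s) * L + (1 - s) * u) * exp ((s - 1) * L) * (1 - exp ((s - 1) * u)) = exp ((1 - s) * u) - 1"
    by (simp add: algebra_simps exp_add[symmetric])
  finally show ?thesis unfolding Dt_def u_def by (simp add: algebra_simps)
qed



lemma plogp_eq: "plogp t = t * log 2 t" by (simp add: plogp_def)

lemma plogp_cont: "continuous_on {0..1} plogp"
  unfolding continuous_on_def
proof
  fix x :: real assume x: "x \<in> {0..1}"
  show "(plogp \<longlongrightarrow> plogp x) (at x within {0..1})"
  proof (cases "x = 0")
    case True
    have "((\<lambda>t::real. t * log 2 t) \<longlongrightarrow> 0) (at_right 0)"
      unfolding log_def by real_asymp
    then show ?thesis using True by (simp add: at_within_Icc_at_right plogp_eq[abs_def])
  next
    case False
    then have "x > 0" using x by simp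
    have "isCont (\<lambda>t. t * log 2 t) x"
      using \<open>x > 0\<close> by (intro continuous_intros) auto
    then have "isCont plogp x" by (simp add: plogp_eq[abs_def])
    then show ?thesis using isCont_def tendsto_within_subset by (metis subset_UNIV)
  qed
qed

lemma h_cont: "continuous_on {0..1} bin_entropy"
proof -
  have c1: "continuous_on {0..1} (\<lambda>e::real. plogp (1 - e))"
    by (rule continuous_on_compose2[OF plogp_cont]) (auto intro!: continuous_intros)
  show ?thesis unfolding bin_entropy_def[abs_def]
    by (intro continuous_intros plogp_cont c1)
qed

lemma h_deriv:
  assumes "0 < e" "e < 1"
  shows "(bin_entropy has_real_derivative ln ((1 - e) / e) / ln 2) (at e)"
proof -
  have "((\<lambda>e. - (e * (ln e / ln 2)) - (1 - e) * (ln (1 - e) / ln 2)) has_real_derivative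
      ln ((1 - e) / e) / ln 2) (at e)"
    using assms
    apply (auto intro!: derivative_eq_intros simp: ln_div)
    apply (simp add: divide_simps)
    done
  moreover have "bin_entropy = (\<lambda>e. - (e * (ln e / ln 2)) - (1 - e) * (ln (1 - e) / ln 2))"
    by (simp add: fun_eq_iff bin_entropy_def plogp_eq log_def)
  ultimately show ?thesis by simp
qed

lemma h_sym: "bin_entropy (1 - e) = bin_entropy e"
  by (simp add: bin_entropy_def)

lemma h_0: "bin_entropy 0 = 0" by (simp add: bin_entropy_def plogp_def)
lemma h_half: "bin_entropy (1/2) = 1" by (simp add: bin_entropy_def plogp_def log_divide)

lemma h_strict: assumes "0 \<le> a" "a < b" "b \<le> 1/2" shows "bin_entropy a < bin_entropy b"
proof (rule DERIV_pos_imp_increasing_open[OF assms(2)])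
  fix x assume x: "a < x" "x < b"
  have "ln ((1 - x) / x) / ln 2 > 0" using x assms by (simp add: field_simps)
  then show "\<exists>y. (bin_entropy has_real_derivative y) (at x) \<and> 0 < y"
    using h_deriv[of x] x assms by auto
next
  show "continuous_on {a..b} bin_entropy"
    by (rule continuous_on_subset[OF h_cont]) (use assms in auto)
qed

lemma h_mono: assumes "0 \<le> a" "a \<le> b" "b \<le> 1/2" shows "bin_entropy a \<le> bin_entropy b"
  using h_strict[of a b] assms by (cases "a = b") auto

lemma h_range: assumes "0 \<le> e" "e \<le> 1" shows "0 \<le> bin_entropy e \<and> bin_entropy e \<le> 1"
proof (cases "e \<le> 1/2")
  case True
  then show ?thesis using h_mono[of 0 e] h_mono[of e "1/2"] assms h_0 h_half by auto
next
  case False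
  then show ?thesis using h_mono[of 0 "1-e"] h_mono[of "1-e" "1/2"] assms h_0 h_half h_sym[of e] by auto
qed

lemma hinv:
  assumes "0 \<le> t" "t \<le> 1"
  shows "bin_entropy_inv t \<in> {0..1/2} \<and> bin_entropy (bin_entropy_inv t) = t"
proof -
  have ex: "\<exists>e. 0 \<le> e \<and> e \<le> 1/2 \<and> bin_entropy e = t"
    by (rule IVT') (use assms h_0 h_half in \<open>auto intro: continuous_on_subset[OF h_cont]\<close>)
  have "\<exists>!e. e \<in> {0..1/2} \<and> bin_entropy e = t"
  proof -
    from ex obtain e where e: "e \<in> {0..1/2}" "bin_entropy e = t" by auto
    moreover have "e' = e" if "e' \<in> {0..1/2}" "bin_entropy e' = t" for e'
      using h_strict[of e e'] h_strict[of e' e] that e by (cases e e' rule: linorder_cases) auto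
    ultimately show ?thesis by blast
  qed
  then show ?thesis unfolding bin_entropy_inv_def by (rule theI')
qed

lemma hinv_h: assumes "0 \<le> e" "e \<le> 1/2" shows "bin_entropy_inv (bin_entropy e) = e"
proof -
  have r: "0 \<le> bin_entropy e \<and> bin_entropy e \<le> 1" using h_range assms by auto
  from hinv[of "bin_entropy e"] r have "bin_entropy_inv (bin_entropy e) \<in> {0..1/2}"
      "bin_entropy (bin_entropy_inv (bin_entropy e)) = bin_entropy e" by auto
  then show ?thesis using h_strict[of e "bin_entropy_inv (bin_entropy e)"]
      h_strict[of "bin_entropy_inv (bin_entropy e)" e] assms
    by (cases e "bin_entropy_inv (bin_entropy e)" rule: linorder_cases) auto
qed



definition Gf :: "real \<Rightarrow> real \<Rightarrow> real" where
  "Gf \<rho> e = 2 powr (-\<rho>) * (e powr (1/(1+\<rho>)) + (1 - e) powr (1/(1+\<rho>))) powr (1+\<rho>)"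

lemma A_pos: fixes e s :: real assumes "0 \<le> e" "e \<le> 1" "s > 0" shows "e powr s + (1 - e) powr s > 0"
proof (cases "e = 0")
  case True then show ?thesis by auto
next
  case False then have "e powr s > 0" using assms by simp
  moreover have "(1 - e) powr s \<ge> 0" by simp
  ultimately show ?thesis by linarith
qed

lemma Gf_cont: assumes "\<rho> > -1" shows "continuous_on {0..1} (Gf \<rho>)"
proof -
  have s: "1/(1+\<rho>) > 0" using assms by simp
  have c: "continuous_on {0..1} (\<lambda>e::real. e powr (1/(1+\<rho>)) + (1 - e) powr (1/(1+\<rho>)))"
    using s by (intro continuous_intros continuous_on_powr') auto
  show ?thesis unfolding Gf_def[abs_def]
    using A_pos[OF _ _ s] by (intro continuous_intros c) (auto simp: less_le)
qed

lemma Gf_deriv: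
  assumes r: "\<rho> > -1" and e: "0 < e" "e < 1"
  shows "(Gf \<rho> has_real_derivative
     2 powr (-\<rho>) * (e powr (1/(1+\<rho>)) + (1 - e) powr (1/(1+\<rho>))) powr \<rho>
       * (e powr (1/(1+\<rho>) - 1) - (1 - e) powr (1/(1+\<rho>) - 1))) (at e)"
proof -
  define s where "s = 1/(1+\<rho>)"
  have s: "s > 0" "s * (1 + \<rho>) = 1" using r by (auto simp: s_def)
  define A where "A = e powr s + (1 - e) powr s"
  have Ap: "A > 0" unfolding A_def using A_pos[of e s] e s by auto
  have dA: "((\<lambda>e. e powr s + (1 - e) powr s) has_real_derivative
      s * e powr (s - 1) - s * (1 - e) powr (s - 1)) (at e)"
    using e by (auto intro!: derivative_eq_intros simp: powr_diff)
  have D0: "((\<lambda>e. 2 powr (-\<rho>) * (e powr s + (1 - e) powr s) powr (1+\<rho>)) has_real_derivative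
     2 powr (-\<rho>) * ((1+\<rho>) * A powr (1 + \<rho> - 1) * (s * e powr (s - 1) - s * (1 - e) powr (s - 1)))) (at e)"
    unfolding A_def
    using DERIV_cmult[OF DERIV_fun_powr[OF dA, of "1+\<rho>"], of "2 powr (-\<rho>)"] Ap[unfolded A_def]
    by (simp add: mult.assoc)
  have EQ: "2 powr (-\<rho>) * ((1+\<rho>) * A powr (1 + \<rho> - 1) * (s * e powr (s - 1) - s * (1 - e) powr (s - 1)))
      = 2 powr (-\<rho>) * A powr \<rho> * (e powr (s - 1) - (1 - e) powr (s - 1))"
  proof -
    have "(1+\<rho>) * (s * e powr (s - 1) - s * (1 - e) powr (s - 1)) = (e powr (s - 1) - (1 - e) powr (s - 1))"
    proof -
      have "(1+\<rho>) * (s * e powr (s - 1) - s * (1 - e) powr (s - 1)) = (s * (1 + \<rho>)) * (e powr (s - 1) - (1 - e) powr (s - 1))"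
        by (simp add: algebra_simps)
      then show ?thesis using s(2) by simp
    qed
    moreover have "2 powr (-\<rho>) * ((1+\<rho>) * A powr (1 + \<rho> - 1) * (s * e powr (s - 1) - s * (1 - e) powr (s - 1)))
      = 2 powr (-\<rho>) * A powr \<rho> * ((1+\<rho>) * (s * e powr (s - 1) - s * (1 - e) powr (s - 1)))"
      by (simp only: ac_simps) simp
    ultimately show ?thesis by simp
  qed
  have D: "((\<lambda>e. 2 powr (-\<rho>) * (e powr s + (1-e) powr s) powr (1+\<rho>)) has_real_derivative
      2 powr (-\<rho>) * A powr \<rho> * (e powr (s-1) - (1-e) powr (s-1))) (at e)" using D0 unfolding EQ .
  then show ?thesis unfolding Gf_def[abs_def] A_def s_def .
qed




lemma cmvt:
  fixes f g :: "real \<Rightarrow> real"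
  assumes ab: "a < b" and cf: "continuous_on {a..b} f" and cg: "continuous_on {a..b} g"
    and df: "\<And>z. a < z \<Longrightarrow> z < b \<Longrightarrow> (f has_real_derivative f' z) (at z)"
    and dg: "\<And>z. a < z \<Longrightarrow> z < b \<Longrightarrow> (g has_real_derivative g' z) (at z)"
  shows "\<exists>c. a < c \<and> c < b \<and> (f b - f a) * g' c = (g b - g a) * f' c"
proof -
  define k where "k = (\<lambda>x. (f b - f a) * g x - (g b - g a) * f x)"
  have kab: "k a = k b" by (simp add: k_def algebra_simps)
  have ck: "continuous_on {a..b} k" unfolding k_def by (intro continuous_intros cf cg)
  have dk: "(k has_real_derivative (f b - f a) * g' z - (g b - g a) * f' z) (at z)" if "a < z" "z < b" for z
    unfolding k_def by (intro DERIV_diff DERIV_cmult df dg that)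
  obtain z where z: "a < z" "z < b" "(k has_real_derivative 0) (at z)"
    using Rolle[OF ab kab ck] dk real_differentiable_def by blast
  then have "(f b - f a) * g' z - (g b - g a) * f' z = 0" using dk[OF z(1,2)] DERIV_unique by blast
  then show ?thesis using z by auto
qed

lemma Rr_anti:
  assumes r: "\<rho> > -1" and e: "0 < e1" "e1 \<le> e2" "e2 < 1/2"
  shows "Rr (1/(1+\<rho>)) \<rho> e2 \<le> Rr (1/(1+\<rho>)) \<rho> e1"
proof -
  define s where "s = 1/(1+\<rho>)"
  have s: "s > 0" "\<rho> * s = 1 - s" using r by (auto simp: s_def field_simps)
  have q: "1 < (1 - e2) / e2" "(1 - e2) / e2 \<le> (1 - e1) / e1" using e by (auto simp: field_simps)
  have "Dt s \<rho> (ln ((1 - e2) / e2)) \<le> Dt s \<rho> (ln ((1 - e1) / e1))"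
    by (rule Dt_mono[OF s]) (use q in auto)
  then show ?thesis using Rr_Dt[OF s(2), of e1] Rr_Dt[OF s(2), of e2] e unfolding s_def by simp
qed

lemma slope_mvt:
  assumes r: "\<rho> > -1" and e: "0 \<le> e1" "e1 < e2" "e2 \<le> 1/2"
  shows "\<exists>z. e1 < z \<and> z < e2 \<and>
    Gf \<rho> e2 - Gf \<rho> e1 = (bin_entropy e2 - bin_entropy e1) * (2 powr (-\<rho>) * ln 2 * Rr (1/(1+\<rho>)) \<rho> z)"
proof -
  obtain z where z: "e1 < z" "z < e2" and eq:
    "(Gf \<rho> e2 - Gf \<rho> e1) * (ln ((1 - z) / z) / ln 2) = (bin_entropy e2 - bin_entropy e1) *
     (2 powr (-\<rho>) * (z powr (1/(1+\<rho>)) + (1 - z) powr (1/(1+\<rho>))) powr \<rho>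
       * (z powr (1/(1+\<rho>) - 1) - (1 - z) powr (1/(1+\<rho>) - 1)))"
    using cmvt[OF e(2) continuous_on_subset[OF Gf_cont[OF r]] continuous_on_subset[OF h_cont] Gf_deriv[OF r] h_deriv] e
    by fastforce
  have lp: "ln ((1 - z) / z) > 0" using z e by (simp add: field_simps)
  have "Gf \<rho> e2 - Gf \<rho> e1 = (bin_entropy e2 - bin_entropy e1) *
     (2 powr (-\<rho>) * (z powr (1/(1+\<rho>)) + (1 - z) powr (1/(1+\<rho>))) powr \<rho>
       * (z powr (1/(1+\<rho>) - 1) - (1 - z) powr (1/(1+\<rho>) - 1))) / (ln ((1 - z) / z) / ln 2)"
    using eq lp by (simp add: field_simps)
  also have "\<dots> = (bin_entropy e2 - bin_entropy e1) * (2 powr (-\<rho>) * ln 2 * Rr (1/(1+\<rho>)) \<rho> z)"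
    unfolding Rr_def using lp by (simp add: field_simps)
  finally show ?thesis using z by blast
qed

lemma three_point:
  assumes r: "\<rho> > -1" and e: "0 \<le> e1" "e1 < e2" "e2 < e3" "e3 \<le> 1/2"
  shows "(Gf \<rho> e3 - Gf \<rho> e2) / (bin_entropy e3 - bin_entropy e2)
       \<le> (Gf \<rho> e2 - Gf \<rho> e1) / (bin_entropy e2 - bin_entropy e1)"
proof -
  obtain z1 where z1: "e1 < z1" "z1 < e2" and q1:
    "Gf \<rho> e2 - Gf \<rho> e1 = (bin_entropy e2 - bin_entropy e1) * (2 powr (-\<rho>) * ln 2 * Rr (1/(1+\<rho>)) \<rho> z1)"
    using slope_mvt[OF r, of e1 e2] e by auto
  obtain z2 where z2: "e2 < z2" "z2 < e3" and q2:
    "Gf \<rho> e3 - Gf \<rho> e2 = (bin_entropy e3 - bin_entropy e2) * (2 powr (-\<rho>) * ln 2 * Rr (1/(1+\<rho>)) \<rho> z2)"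
    using slope_mvt[OF r, of e2 e3] e by auto
  have h1: "bin_entropy e2 - bin_entropy e1 > 0" using h_strict[of e1 e2] e by simp
  have h2: "bin_entropy e3 - bin_entropy e2 > 0" using h_strict[of e2 e3] e by simp
  have "Rr (1/(1+\<rho>)) \<rho> z2 \<le> Rr (1/(1+\<rho>)) \<rho> z1"
    by (rule Rr_anti[OF r]) (use z1 z2 e in auto)
  then have "2 powr (-\<rho>) * ln 2 * Rr (1/(1+\<rho>)) \<rho> z2 \<le> 2 powr (-\<rho>) * ln 2 * Rr (1/(1+\<rho>)) \<rho> z1"
    by (intro mult_left_mono) auto
  then show ?thesis using h1 h2 unfolding q1 q2 by simp
qed

definition phi :: "real \<Rightarrow> real \<Rightarrow> real" where
  "phi \<rho> t = Gf \<rho> (bin_entropy_inv t)"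

lemma hinv_strict:
  assumes "0 \<le> t1" "t1 < t2" "t2 \<le> 1"
  shows "bin_entropy_inv t1 < bin_entropy_inv t2"
proof (rule ccontr)
  assume "\<not> ?thesis"
  then have "bin_entropy_inv t2 \<le> bin_entropy_inv t1" by simp
  then have "bin_entropy (bin_entropy_inv t2) \<le> bin_entropy (bin_entropy_inv t1)"
    using hinv[of t1] hinv[of t2] assms by (intro h_mono) auto
  then show False using hinv[of t1] hinv[of t2] assms by auto
qed

lemma phi_three:
  assumes r: "\<rho> > -1" and t: "0 \<le> t1" "t1 < t2" "t2 < t3" "t3 \<le> 1"
  shows "(phi \<rho> t3 - phi \<rho> t2) / (t3 - t2) \<le> (phi \<rho> t2 - phi \<rho> t1) / (t2 - t1)"
proof -
  define e1 e2 e3 where "e1 = bin_entropy_inv t1" "e2 = bin_entropy_inv t2" "e3 = bin_entropy_inv t3"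
  have e: "0 \<le> e1" "e1 < e2" "e2 < e3" "e3 \<le> 1/2"
    using hinv_strict[of t1 t2] hinv_strict[of t2 t3] hinv[of t1] hinv[of t3] t
    unfolding e1_e2_e3_def by auto
  have ht: "bin_entropy e1 = t1" "bin_entropy e2 = t2" "bin_entropy e3 = t3"
    using hinv[of t1] hinv[of t2] hinv[of t3] t unfolding e1_e2_e3_def by auto
  show ?thesis using three_point[OF r e] unfolding ht by (simp add: phi_def e1_e2_e3_def)
qed

lemma frac_aux: fixes a b P Q :: real shows "a > 0 \<Longrightarrow> b > 0 \<Longrightarrow> P / a \<le> Q / b \<Longrightarrow> P * b \<le> Q * a"
  by (simp add: field_simps)

lemma phi_concave:
  assumes r: "\<rho> > -1"
  shows "concave_on {0..1} (phi \<rho>)"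
proof (rule concave_on_linorderI)
  fix t x y :: real
  assume a: "0 < t" "t < 1" "x \<in> {0..1}" "y \<in> {0..1}" "x < y"
  define m where "m = (1 - t) * x + t * y"
  have "(1 - t) * x < (1 - t) * y" "t * x < t * y" using a by (auto intro: mult_strict_left_mono)
  then have m: "x < m" "m < y" unfolding m_def by (auto simp: algebra_simps)
  have "(phi \<rho> y - phi \<rho> m) / (y - m) \<le> (phi \<rho> m - phi \<rho> x) / (m - x)"
    by (rule phi_three[OF r]) (use a m in auto)
  moreover have "y - m = (1 - t) * (y - x)" "m - x = t * (y - x)" unfolding m_def by algebra+
  ultimately have "(phi \<rho> y - phi \<rho> m) / ((1 - t) * (y - x)) \<le> (phi \<rho> m - phi \<rho> x) / (t * (y - x))"
    by simp
  then have "(phi \<rho> y - phi \<rho> m) * (t * (y - x)) \<le> (phi \<rho> m - phi \<rho> x) * ((1 - t) * (y - x))"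
    using frac_aux[of "(1 - t) * (y - x)" "t * (y - x)"] a by simp
  then have "(t * (phi \<rho> y - phi \<rho> m)) * (y - x) \<le> ((1 - t) * (phi \<rho> m - phi \<rho> x)) * (y - x)"
    by (simp add: algebra_simps)
  then have "t * (phi \<rho> y - phi \<rho> m) \<le> (1 - t) * (phi \<rho> m - phi \<rho> x)"
    using a by (simp add: mult_le_cancel_right)
  then show "(1 - t) * phi \<rho> x + t * phi \<rho> y \<le> phi \<rho> ((1 - t) *\<^sub>R x + t *\<^sub>R y)"
    unfolding m_def[symmetric] by (simp add: m_def algebra_simps)
qed simp



lemma term_eq:
  fixes p B \<rho> :: real
  assumes p: "p \<ge> 0" and B: "B > 0" and r: "\<rho> > -1"
  shows "(if p > 0 then p * ((1/2 * B) / p powr (1/(1+\<rho>))) powr \<rho> else 0)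
         = 2 powr (-\<rho>) * p powr (1/(1+\<rho>)) * B powr \<rho>"
proof (cases "p > 0")
  case False then have "p = 0" using p by simp
  then show ?thesis using r by simp
next
  case True
  define s where "s = 1/(1+\<rho>)"
  have s: "s * \<rho> = 1 - s" using r by (simp add: s_def field_simps)
  have "((1/2 * B) / p powr s) powr \<rho> = (1/2) powr \<rho> * B powr \<rho> / p powr (s * \<rho>)"
    using True B by (simp add: powr_divide powr_mult powr_powr)
  also have "(1/2::real) powr \<rho> = 2 powr (-\<rho>)" by (simp add: powr_divide powr_minus_divide)
  finally have "p * ((1/2 * B) / p powr s) powr \<rho> = 2 powr (-\<rho>) * B powr \<rho> * (p / p powr (1 - s))"
    unfolding s by simp
  also have "p / p powr (1 - s) = p powr s" using True by (simp add: powr_diff)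
  finally show ?thesis using True unfolding s_def by (simp add: algebra_simps)
qed

lemma col_F:
  fixes p q \<rho> :: real
  assumes p: "p \<ge> 0" and q: "q \<ge> 0" and pq: "p + q > 0" and r: "\<rho> > -1"
  shows "(if p > 0 then p * ((1/2 * (p powr (1/(1+\<rho>)) + q powr (1/(1+\<rho>)))) / p powr (1/(1+\<rho>))) powr \<rho> else 0)
       + (if q > 0 then q * ((1/2 * (p powr (1/(1+\<rho>)) + q powr (1/(1+\<rho>)))) / q powr (1/(1+\<rho>))) powr \<rho> else 0)
       = (p + q) * Gf \<rho> (p / (p + q))"
proof -
  define s where "s = 1/(1+\<rho>)"
  have s: "s > 0" "s * (1 + \<rho>) = 1" using r by (auto simp: s_def field_simps)
  define B where "B = p powr s + q powr s"
  define m where "m = p + q"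
  define A where "A = (p/m) powr s + (1 - p/m) powr s"
  have B: "B > 0" unfolding B_def using A_pos[of "p/(p+q)" s] p q pq s
    by (cases "p > 0") (auto simp: add_pos_nonneg)
  have qm: "1 - p/m = q/m" using pq unfolding m_def by (simp add: field_simps)
  have BA: "B = m powr s * A"
    unfolding B_def A_def qm using pq p q unfolding m_def by (simp add: powr_divide algebra_simps)
  have "(if p > 0 then p * ((1/2 * B) / p powr s) powr \<rho> else 0)
      + (if q > 0 then q * ((1/2 * B) / q powr s) powr \<rho> else 0)
      = 2 powr (-\<rho>) * B * B powr \<rho>"
    using term_eq[OF p B r] term_eq[OF q B r] unfolding s_def[symmetric] B_def
    by (simp add: algebra_simps)
  also have "\<dots> = 2 powr (-\<rho>) * B powr (1 + \<rho>)" using B by (simp add: powr_add)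
  also have "\<dots> = 2 powr (-\<rho>) * (m powr (s * (1 + \<rho>)) * A powr (1 + \<rho>))"
    unfolding BA by (simp add: powr_mult powr_powr)
  also have "\<dots> = 2 powr (-\<rho>) * (m * A powr (1 + \<rho>))" using s pq unfolding m_def by simp
  finally show ?thesis unfolding Gf_def s_def[symmetric] B_def[symmetric] A_def m_def
    by (simp add: algebra_simps)
qed

lemma col_C:
  fixes p q :: real
  assumes p: "p \<ge> 0" and q: "q \<ge> 0" and pq: "p + q > 0"
  shows "(if p > 0 then p * log 2 (p / (1/2 * (p + q))) else 0)
       + (if q > 0 then q * log 2 (q / (1/2 * (p + q))) else 0)
       = (p + q) * (1 - bin_entropy (p / (p + q)))"
proof -
  define m where "m = p + q"
  have m: "m > 0" using pq m_def by simp
  have qm: "1 - p/m = q/m" using pq unfolding m_def by (simp add: field_simps)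
  have t: "(if x > 0 then x * log 2 (x / (1/2 * m)) else 0) = x + m * plogp (x / m)" if "x \<ge> 0" for x
  proof (cases "x > 0")
    case True
    have "log 2 (x / (1/2 * m)) = 1 + log 2 (x / m)" using True m
      by (simp add: log_divide log_mult field_simps)
    then show ?thesis using True m by (simp add: plogp_def field_simps)
  next
    case False then show ?thesis using that by (simp add: plogp_def)
  qed
  show ?thesis unfolding m_def[symmetric] t[OF p] t[OF q] bin_entropy_def
    using qm m unfolding m_def by (simp add: algebra_simps qm[unfolded m_def])
qed




definition wy :: "(bool \<Rightarrow> 'y::finite \<Rightarrow> real) \<Rightarrow> 'y \<Rightarrow> real" where
  "wy W y = (W False y + W True y) / 2"
definition ey :: "(bool \<Rightarrow> 'y::finite \<Rightarrow> real) \<Rightarrow> 'y \<Rightarrow> real" where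
  "ey W y = W False y / (W False y + W True y)"

lemma sum_bool: "(\<Sum>x\<in>UNIV. f x) = f False + (f True :: real)"
  by (simp add: UNIV_bool)

lemma sum_filt: fixes f :: "'y::finite \<Rightarrow> real" shows "(\<Sum>y | P y. f y) = (\<Sum>y\<in>UNIV. if P y then f y else 0)"
  using sum.inter_filter[of UNIV f P] by simp

lemma sum_filter_swap:
  fixes T :: "bool \<Rightarrow> 'y::finite \<Rightarrow> real"
  shows "(\<Sum>x\<in>UNIV. 1/2 * (\<Sum>y | P x y. T x y)) = (\<Sum>y\<in>UNIV. 1/2 * ((if P False y then T False y else 0) + (if P True y then T True y else 0)))"
proof -
  have "(\<Sum>x\<in>UNIV. 1/2 * (\<Sum>y | P x y. T x y)) = (\<Sum>x\<in>UNIV. \<Sum>y\<in>UNIV. 1/2 * (if P x y then T x y else 0))"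
    by (simp add: sum_filt sum_distrib_left)
  also have "\<dots> = (\<Sum>y\<in>UNIV. \<Sum>x\<in>UNIV. 1/2 * (if P x y then T x y else 0))" by (rule sum.swap)
  also have "\<dots> = (\<Sum>y\<in>UNIV. 1/2 * ((if P False y then T False y else 0) + (if P True y then T True y else 0)))"
    by (simp add: UNIV_bool algebra_simps)
  finally show ?thesis .
qed

lemma F_decomp:
  fixes W :: "bool \<Rightarrow> 'y::finite \<Rightarrow> real"
  assumes W: "stochastic_channel W" and r: "\<rho> > -1"
  shows "gallager_F W \<rho> = (\<Sum>y | wy W y > 0. wy W y * Gf \<rho> (ey W y))"
proof -
  have nn: "W x y \<ge> 0" for x y using W by (simp add: stochastic_channel_def)
  have "gallager_F W \<rho> = (\<Sum>y\<in>UNIV. 1/2 * (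
      (if W False y > 0 then W False y * ((1/2 * (W False y powr (1/(1+\<rho>)) + W True y powr (1/(1+\<rho>)))) / W False y powr (1/(1+\<rho>))) powr \<rho> else 0)
    + (if W True y > 0 then W True y * ((1/2 * (W False y powr (1/(1+\<rho>)) + W True y powr (1/(1+\<rho>)))) / W True y powr (1/(1+\<rho>))) powr \<rho> else 0)))"
    unfolding gallager_F_def sum_filter_swap sum_bool[of "\<lambda>x'. W x' _ powr _"] by (simp add: add.commute)
  also have "\<dots> = (\<Sum>y\<in>UNIV. if wy W y > 0 then wy W y * Gf \<rho> (ey W y) else 0)"
  proof (rule sum.cong[OF refl])
    fix y
    show "1/2 * (
      (if W False y > 0 then W False y * ((1/2 * (W False y powr (1/(1+\<rho>)) + W True y powr (1/(1+\<rho>)))) / W False y powr (1/(1+\<rho>))) powr \<rho> else 0)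
    + (if W True y > 0 then W True y * ((1/2 * (W False y powr (1/(1+\<rho>)) + W True y powr (1/(1+\<rho>)))) / W True y powr (1/(1+\<rho>))) powr \<rho> else 0))
      = (if wy W y > 0 then wy W y * Gf \<rho> (ey W y) else 0)"
    proof (cases "wy W y > 0")
      case True
      then have "W False y + W True y > 0" by (simp add: wy_def)
      then show ?thesis using col_F[OF nn nn _ r, of False y True y] True
        by (simp add: wy_def ey_def)
    next
      case False
      then have "W False y = 0" "W True y = 0" using nn[of False y] nn[of True y] by (auto simp: wy_def)
      then show ?thesis using False by simp
    qed
  qed
  also have "\<dots> = (\<Sum>y | wy W y > 0. wy W y * Gf \<rho> (ey W y))"
    by (simp add: sum_filt)
  finally show ?thesis .
qed

lemma C_decomp:
  fixes W :: "bool \<Rightarrow> 'y::finite \<Rightarrow> real"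
  assumes W: "stochastic_channel W"
  shows "capacity W = (\<Sum>y | wy W y > 0. wy W y * (1 - bin_entropy (ey W y)))"
proof -
  have nn: "W x y \<ge> 0" for x y using W by (simp add: stochastic_channel_def)
  have "capacity W = (\<Sum>y\<in>UNIV. 1/2 * (
      (if W False y > 0 then W False y * log 2 (W False y / (1/2 * (W False y + W True y))) else 0)
    + (if W True y > 0 then W True y * log 2 (W True y / (1/2 * (W False y + W True y))) else 0)))"
    unfolding capacity_def sum_filter_swap sum_bool[of "\<lambda>x'. W x' _"] by (simp add: add.commute)
  also have "\<dots> = (\<Sum>y\<in>UNIV. if wy W y > 0 then wy W y * (1 - bin_entropy (ey W y)) else 0)"
  proof (rule sum.cong[OF refl])
    fix y
    show "1/2 * (
      (if W False y > 0 then W False y * log 2 (W False y / (1/2 * (W False y + W True y))) else 0)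
    + (if W True y > 0 then W True y * log 2 (W True y / (1/2 * (W False y + W True y))) else 0))
      = (if wy W y > 0 then wy W y * (1 - bin_entropy (ey W y)) else 0)"
    proof (cases "wy W y > 0")
      case True
      then have "W False y + W True y > 0" by (simp add: wy_def)
      then show ?thesis using col_C[OF nn nn, of False y True y] True
        by (simp add: wy_def ey_def)
    next
      case False
      then have "W False y = 0" "W True y = 0" using nn[of False y] nn[of True y] by (auto simp: wy_def)
      then show ?thesis using False by simp
    qed
  qed
  also have "\<dots> = (\<Sum>y | wy W y > 0. wy W y * (1 - bin_entropy (ey W y)))"
    by (simp add: sum_filt)
  finally show ?thesis .
qed

lemma w_sum:
  fixes W :: "bool \<Rightarrow> 'y::finite \<Rightarrow> real"
  assumes W: "stochastic_channel W"
  shows "(\<Sum>y | wy W y > 0. wy W y) = 1"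
proof -
  have nn: "W x y \<ge> 0" for x y using W by (simp add: stochastic_channel_def)
  have "(\<Sum>y\<in>UNIV. wy W y) = 1"
    using W unfolding stochastic_channel_def wy_def by (simp add: sum.distrib sum_divide_distrib[symmetric])
  moreover have "(\<Sum>y\<in>UNIV. wy W y) = (\<Sum>y | wy W y > 0. wy W y)"
  proof -
    have "(\<Sum>y\<in>UNIV. wy W y) = (\<Sum>y\<in>UNIV. if wy W y > 0 then wy W y else 0)"
      by (rule sum.cong) (use nn in \<open>auto simp: wy_def intro: antisym add_nonneg_nonneg\<close>)
    then show ?thesis by (simp add: sum_filt)
  qed
  ultimately show ?thesis by simp
qed




lemma Gf_sym: "Gf \<rho> (1 - e) = Gf \<rho> e" by (simp add: Gf_def add.commute)

lemma phi_h: assumes "0 \<le> e" "e \<le> 1" shows "phi \<rho> (bin_entropy e) = Gf \<rho> e"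
proof (cases "e \<le> 1/2")
  case True then show ?thesis using hinv_h[of e] assms by (simp add: phi_def)
next
  case False
  then have "phi \<rho> (bin_entropy (1 - e)) = Gf \<rho> (1 - e)" using hinv_h[of "1 - e"] assms by (simp add: phi_def)
  then show ?thesis by (simp add: h_sym Gf_sym)
qed

lemma phi0: assumes "\<rho> > -1" shows "phi \<rho> 0 = 2 powr (-\<rho>)"
proof -
  have "phi \<rho> 0 = Gf \<rho> 0" using phi_h[of 0 \<rho>] h_0 by simp
  then show ?thesis using assms by (simp add: Gf_def)
qed

lemma phi1: assumes r: "\<rho> > -1" shows "phi \<rho> 1 = 1"
proof -
  define s where "s = 1/(1+\<rho>)"
  have s: "s * (1 + \<rho>) = 1" using r by (simp add: s_def)
  have "phi \<rho> 1 = Gf \<rho> (1/2)" using phi_h[of "1/2" \<rho>] h_half by simp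
  also have "\<dots> = 2 powr (-\<rho>) * (2 * (1/2) powr s) powr (1 + \<rho>)"
    unfolding Gf_def s_def by simp
  also have "(2 * (1/2::real) powr s) powr (1 + \<rho>) = 2 powr (1 + \<rho>) * (1/2) powr (s * (1 + \<rho>))"
    by (simp add: powr_mult powr_powr)
  also have "\<dots> = 2 powr \<rho>" unfolding s by (simp add: powr_add)
  finally show ?thesis by (simp add: powr_minus)
qed

lemma F_bounds:
  fixes W :: "bool \<Rightarrow> 'y::finite \<Rightarrow> real"
  assumes W: "stochastic_channel W" and r: "\<rho> > -1"
  shows "F_bec (capacity W) \<rho> \<le> gallager_F W \<rho> \<and> gallager_F W \<rho> \<le> F_bsc (capacity W) \<rho>
     \<and> 0 \<le> capacity W \<and> capacity W \<le> 1"
proof -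
  define Y where "Y = {y. wy W y > 0}"
  define t where "t = (\<lambda>y. bin_entropy (ey W y))"
  define C where "C = capacity W"
  have nn: "W x y \<ge> 0" for x y using W by (simp add: stochastic_channel_def)
  have fin: "finite Y" by simp
  have ws: "(\<Sum>y\<in>Y. wy W y) = 1" using w_sum[OF W] unfolding Y_def .
  then have ne: "Y \<noteq> {}" by auto
  have wpos: "y \<in> Y \<Longrightarrow> wy W y > 0" for y by (simp add: Y_def)
  have erange: "0 \<le> ey W y \<and> ey W y \<le> 1" if "y \<in> Y" for y
    using wpos[OF that] nn[of False y] nn[of True y] by (auto simp: wy_def ey_def field_simps)
  have trange: "t y \<in> {0..1}" if "y \<in> Y" for y using h_range erange[OF that] by (simp add: t_def)
  have F: "gallager_F W \<rho> = (\<Sum>y\<in>Y. wy W y * phi \<rho> (t y))"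
    unfolding F_decomp[OF W r] Y_def[symmetric] t_def
    by (rule sum.cong[OF refl]) (use phi_h erange in auto)
  have Ceq: "C = (\<Sum>y\<in>Y. wy W y * (1 - t y))" unfolding C_def C_decomp[OF W] Y_def t_def ..
  have C2: "(\<Sum>y\<in>Y. wy W y * t y) = 1 - C"
    unfolding Ceq using ws by (simp add: algebra_simps sum_subtractf)
  have Crange: "0 \<le> C \<and> C \<le> 1"
  proof -
    have "0 \<le> (\<Sum>y\<in>Y. wy W y * t y)" using trange wpos by (intro sum_nonneg) (auto intro: mult_nonneg_nonneg less_imp_le)
    moreover have "(\<Sum>y\<in>Y. wy W y * t y) \<le> (\<Sum>y\<in>Y. wy W y)"
      using trange wpos by (intro sum_mono) (auto intro: mult_left_le less_imp_le)
    ultimately show ?thesis using C2 ws by simp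
  qed
  have conc: "concave_on {0..1} (phi \<rho>)" by (rule phi_concave[OF r])
  have up: "gallager_F W \<rho> \<le> F_bsc C \<rho>"
  proof -
    have "(\<lambda>x. - phi \<rho> x) (\<Sum>y\<in>Y. wy W y *\<^sub>R t y) \<le> (\<Sum>y\<in>Y. wy W y * (\<lambda>x. - phi \<rho> x) (t y))"
      by (rule convex_on_sum[OF fin ne conc[unfolded concave_on_def] ws])
         (use wpos trange in \<open>auto intro: less_imp_le\<close>)
    then have "(\<Sum>y\<in>Y. wy W y * phi \<rho> (t y)) \<le> phi \<rho> (1 - C)"
      using C2 by (simp add: sum_negf)
    moreover have "phi \<rho> (1 - C) = F_bsc C \<rho>" by (simp add: phi_def F_bsc_def Gf_def Let_def)
    ultimately show ?thesis using F by simp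
  qed
  have low: "F_bec C \<rho> \<le> gallager_F W \<rho>"
  proof -
    have pt: "(1 - t y) * 2 powr (-\<rho>) + t y \<le> phi \<rho> (t y)" if "y \<in> Y" for y
      using concave_onD[OF conc, of "t y" 0 1] trange[OF that] phi0[OF r] phi1[OF r] by simp
    have "F_bec C \<rho> = (\<Sum>y\<in>Y. wy W y * ((1 - t y) * 2 powr (-\<rho>) + t y))"
    proof -
      have "(\<Sum>y\<in>Y. wy W y * ((1 - t y) * 2 powr (-\<rho>) + t y))
          = (\<Sum>y\<in>Y. wy W y * (1 - t y)) * 2 powr (-\<rho>) + (\<Sum>y\<in>Y. wy W y * t y)"
      proof -
        have "(\<Sum>y\<in>Y. wy W y * ((1 - t y) * 2 powr (-\<rho>) + t y))
            = (\<Sum>y\<in>Y. wy W y * (1 - t y) * 2 powr (-\<rho>) + wy W y * t y)"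
          by (rule sum.cong) (simp_all add: algebra_simps)
        also have "\<dots> = (\<Sum>y\<in>Y. wy W y * (1 - t y) * 2 powr (-\<rho>)) + (\<Sum>y\<in>Y. wy W y * t y)"
          by (rule sum.distrib)
        finally show ?thesis by (simp add: sum_distrib_right)
      qed
      then show ?thesis unfolding Ceq[symmetric] C2 F_bec_def by (simp add: algebra_simps)
    qed
    also have "\<dots> \<le> (\<Sum>y\<in>Y. wy W y * phi \<rho> (t y))"
      using pt wpos by (intro sum_mono mult_left_mono) (auto intro: less_imp_le)
    finally show ?thesis using F by simp
  qed
  show ?thesis using up low Crange unfolding C_def by simp
qed




lemma E0_bounds:
  fixes W :: "bool \<Rightarrow> 'y::finite \<Rightarrow> real"
  assumes W: "stochastic_channel W" and r: "\<rho> > -1"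
  shows "E0_bsc (capacity W) \<rho> \<le> gallager_E0 W \<rho> \<and> gallager_E0 W \<rho> \<le> E0_bec (capacity W) \<rho>"
proof -
  define C where "C = capacity W"
  have b: "F_bec C \<rho> \<le> gallager_F W \<rho>" "gallager_F W \<rho> \<le> F_bsc C \<rho>" "0 \<le> C" "C \<le> 1"
    using F_bounds[OF W r] unfolding C_def by auto
  have "F_bec C \<rho> = (1 - C) + 2 powr (-\<rho>) * C" by (simp add: F_bec_def algebra_simps)
  moreover have "(1 - C) + 2 powr (-\<rho>) * C > 0"
  proof (cases "C = 0")
    case True then show ?thesis by simp
  next
    case False then have "2 powr (-\<rho>) * C > 0" using b by simp
    then show ?thesis using b by linarith
  qed
  ultimately have p: "F_bec C \<rho> > 0" by simp
  then have p2: "gallager_F W \<rho> > 0" using b by linarith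
  have "log 2 (gallager_F W \<rho>) \<le> log 2 (F_bsc C \<rho>)" using b p2 by simp
  moreover have "log 2 (F_bec C \<rho>) \<le> log 2 (gallager_F W \<rho>)" using b p p2 by simp
  ultimately show ?thesis unfolding C_def[symmetric] gallager_E0_def E0_bsc_def E0_bec_def by simp
qed

lemma SUP_ereal_mono:
  assumes "\<And>x. x \<in> S \<Longrightarrow> f x \<le> (g x :: real)"
  shows "(SUP x\<in>S. ereal (f x)) \<le> (SUP x\<in>S. ereal (g x))"
  by (rule SUP_mono) (use assms in auto)

theorem mainTheorem10:
  fixes W :: "bool \<Rightarrow> 'y::finite \<Rightarrow> real" and R :: real
  assumes "BIMS W" and "R \<ge> 0"
  defines "C \<equiv> capacity W"
  shows "(E_sc (E0_bsc C) R \<le> E_sc (gallager_E0 W) R \<and> E_sc (gallager_E0 W) R \<le> E_sc (E0_bec C) R)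
       \<and> (E_sp (E0_bsc C) R \<le> E_sp (gallager_E0 W) R \<and> E_sp (gallager_E0 W) R \<le> E_sp (E0_bec C) R)
       \<and> (E_gfb (E0_bsc C) R \<le> E_gfb (gallager_E0 W) R \<and> E_gfb (gallager_E0 W) R \<le> E_gfb (E0_bec C) R)"
proof -
  have W: "stochastic_channel W" using assms(1) by (simp add: BIMS_def)
  have e1: "E0_bsc C \<rho> \<le> gallager_E0 W \<rho>" and e2: "gallager_E0 W \<rho> \<le> E0_bec C \<rho>" if "\<rho> > -1" for \<rho>
    using E0_bounds[OF W that] unfolding C_def by auto
  have g1: "(E0_bsc C \<rho> - \<rho> * R) / (1 + \<rho>) \<le> (gallager_E0 W \<rho> - \<rho> * R) / (1 + \<rho>)"
    and g2: "(gallager_E0 W \<rho> - \<rho> * R) / (1 + \<rho>) \<le> (E0_bec C \<rho> - \<rho> * R) / (1 + \<rho>)"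
    if "\<rho> \<ge> 0" for \<rho>
    using e1[of \<rho>] e2[of \<rho>] that by (auto intro!: divide_right_mono)
  show ?thesis unfolding E_sc_def E_sp_def E_gfb_def
    by (intro conjI SUP_ereal_mono) (auto intro: e1 e2 g1 g2 simp: diff_right_mono)
qed


end
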